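(* Let $G$ be a simple graph that is either a tree, or is connected and contains exactly one cycle $C$, where $C$ is not a 3-cycle. Form $G'$ from $G$ by adding a new vertex $v$ adjacent to at most four vertices of $G$, at least one of which lies on $C$ if $C$ exists. Then $G'$ has a near-bipartite coloring $I,F$ with $I\subseteq N_{G'}(v)$.
   Context: A near-bipartite coloring of a graph is a partition of its vertex set into $I,F$ with $I$ independent and the subgraph induced by $F$ a forest. *)

theory Defs
  imports Main
begin

definition sgraph :: "'a set \<Rightarrow> ('a \<Rightarrow> 'a \<Rightarrow> bool) \<Rightarrow> bool" where
  "sgraph V E \<longleftrightarrow> finite V \<and> (\<forall>x y. E x y \<longrightarrow> x \<in> V \<and> y \<in> V)
     \<and> (\<forall>x y. E x y \<longrightarrow> E y x) \<and> (\<forall>x. \<not> E x x)"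

definition is_cycle :: "'a set \<Rightarrow> ('a \<Rightarrow> 'a \<Rightarrow> bool) \<Rightarrow> 'a list \<Rightarrow> bool" where
  "is_cycle S E cs \<longleftrightarrow> length cs \<ge> 3 \<and> distinct cs \<and> set cs \<subseteq> S
     \<and> (\<forall>i < length cs. E (cs ! i) (cs ! ((i + 1) mod length cs)))"

definition cyc_edges :: "'a list \<Rightarrow> 'a set set" where
  "cyc_edges cs = {{cs ! i, cs ! ((i + 1) mod length cs)} | i. i < length cs}"

definition induced_forest :: "'a set \<Rightarrow> ('a \<Rightarrow> 'a \<Rightarrow> bool) \<Rightarrow> bool" where
  "induced_forest S E \<longleftrightarrow> (\<nexists>cs. is_cycle S E cs)"

definition connected_graph :: "'a set \<Rightarrow> ('a \<Rightarrow> 'a \<Rightarrow> bool) \<Rightarrow> bool" where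
  "connected_graph V E \<longleftrightarrow>
     (\<forall>x\<in>V. \<forall>y\<in>V. (\<lambda>a b. E a b \<and> a \<in> V \<and> b \<in> V)\<^sup>*\<^sup>* x y)"

definition is_tree :: "'a set \<Rightarrow> ('a \<Rightarrow> 'a \<Rightarrow> bool) \<Rightarrow> bool" where
  "is_tree V E \<longleftrightarrow> V \<noteq> {} \<and> connected_graph V E \<and> induced_forest V E"

definition independent :: "'a set \<Rightarrow> ('a \<Rightarrow> 'a \<Rightarrow> bool) \<Rightarrow> bool" where
  "independent I E \<longleftrightarrow> (\<forall>x\<in>I. \<forall>y\<in>I. \<not> E x y)"

definition near_bipartite_coloring ::
  "'a set \<Rightarrow> ('a \<Rightarrow> 'a \<Rightarrow> bool) \<Rightarrow> 'a set \<Rightarrow> 'a set \<Rightarrow> bool" where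
  "near_bipartite_coloring V E I F \<longleftrightarrow> I \<union> F = V \<and> I \<inter> F = {}
     \<and> independent I E \<and> induced_forest F E"

definition add_vertex :: "('a \<Rightarrow> 'a \<Rightarrow> bool) \<Rightarrow> 'a \<Rightarrow> 'a set \<Rightarrow> 'a \<Rightarrow> 'a \<Rightarrow> bool" where
  "add_vertex E v N x y \<longleftrightarrow> E x y \<or> (x = v \<and> y \<in> N) \<or> (y = v \<and> x \<in> N)"

end

theory Submission
  imports Defs
begin


definition conn :: "('a \<Rightarrow> 'a \<Rightarrow> bool) \<Rightarrow> 'a set \<Rightarrow> 'a \<Rightarrow> 'a \<Rightarrow> bool" where
  "conn E X p q \<longleftrightarrow> (\<lambda>s t. E s t \<and> s \<notin> X \<and> t \<notin> X)\<^sup>*\<^sup>* p q"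

lemma path_exists:
  assumes "R\<^sup>*\<^sup>* p q"
  shows "\<exists>xs. xs \<noteq> [] \<and> hd xs = p \<and> last xs = q \<and> distinct xs \<and> successively R xs"
  using assms
proof (induction rule: converse_rtranclp_induct)
  case base
  then show ?case by (intro exI[of _ "[q]"]) auto
next
  case (step p p')
  then obtain xs where xs: "xs \<noteq> []" "hd xs = p'" "last xs = q" "distinct xs" "successively R xs"
    by blast
  show ?case
  proof (cases "p \<in> set xs")
    case True
    then obtain ys zs where yz: "xs = ys @ p # zs" by (meson split_list)
    show ?thesis
      using xs yz
      by (intro exI[of _ "p # zs"]) (auto simp: successively_append_iff)
  next
    case False
    then show ?thesis using xs step(1)
      by (intro exI[of _ "p # xs"]) (auto simp: successively_Cons)
  qed
qed

lemma successively_nth: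
  assumes "successively R xs" "Suc i < length xs"
  shows "R (xs ! i) (xs ! Suc i)"
  using assms
proof (induction R xs arbitrary: i rule: successively.induct)
  case (3 x y xs)
  then show ?case by (cases i) auto
qed auto

lemma cycle_from_path:
  assumes "distinct xs" "3 \<le> length xs" "set xs \<subseteq> V" "successively E xs"
    "E (last xs) (hd xs)"
  shows "is_cycle V E xs"
  unfolding is_cycle_def
proof (intro conjI allI impI)
  fix i assume i: "i < length xs"
  show "E (xs ! i) (xs ! ((i + 1) mod length xs))"
  proof (cases "Suc i < length xs")
    case True
    then show ?thesis using successively_nth[OF assms(4) True] by simp
  next
    case False
    then have "i = length xs - 1" using i by simp
    moreover have "xs \<noteq> []" using assms(2) by auto
    ultimately show ?thesis using assms(5) i
      by (simp add: last_conv_nth hd_conv_nth)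
  qed
qed (use assms in auto)

lemma succ_set_R:
  assumes "successively (\<lambda>s t. R s t \<and> P s \<and> P t) xs" "2 \<le> length xs"
  shows "\<forall>x\<in>set xs. P x"
proof
  fix x assume "x \<in> set xs"
  then obtain k where k: "k < length xs" "x = xs ! k" by (metis in_set_conv_nth)
  show "P x"
  proof (cases "Suc k < length xs")
    case True
    then show ?thesis using successively_nth[OF assms(1) True] k by simp
  next
    case False
    then have "Suc (k - 1) < length xs" "Suc (k - 1) = k" using k assms(2) by auto
    then show ?thesis using successively_nth[OF assms(1), of "k - 1"] k by simp
  qed
qed

lemma succ_mono: "successively R xs \<Longrightarrow> (\<And>s t. R s t \<Longrightarrow> Q s t) \<Longrightarrow> successively Q xs"
  using successively_mono[of R xs Q] by blast

lemma rtranclp_sym: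
  assumes "\<And>x y. R x y \<Longrightarrow> R y x" "R\<^sup>*\<^sup>* a b"
  shows "R\<^sup>*\<^sup>* b a"
  using assms(2)
proof (induction rule: rtranclp_induct)
  case base then show ?case by simp
next
  case (step y z)
  then show ?case using assms(1) by (meson converse_rtranclp_into_rtranclp)
qed

lemma conn_sym:
  assumes "\<forall>x y. E x y \<longrightarrow> E y x" "conn E X p q"
  shows "conn E X q p"
proof -
  have "(\<lambda>s t. E s t \<and> s \<notin> X \<and> t \<notin> X)\<^sup>*\<^sup>* q p"
    by (rule rtranclp_sym[OF _ assms(2)[unfolded conn_def]]) (use assms(1) in simp)
  then show ?thesis unfolding conn_def .
qed


lemma conn_path:
  assumes "conn E X p q" "p \<noteq> q"
  obtains xs where "xs \<noteq> []" "hd xs = p" "last xs = q" "distinct xs" "2 \<le> length xs"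
    "successively E xs" "set xs \<inter> X = {}"
proof -
  obtain xs where xs: "xs \<noteq> []" "hd xs = p" "last xs = q" "distinct xs"
    "successively (\<lambda>s t. E s t \<and> s \<notin> X \<and> t \<notin> X) xs"
    using path_exists[OF assms(1)[unfolded conn_def]] by blast
  have l2: "2 \<le> length xs"
  proof (rule ccontr)
    assume "\<not> 2 \<le> length xs"
    moreover have "length xs \<noteq> 0" using xs(1) by simp
    ultimately have "length xs = 1" by arith
    then obtain a where "xs = [a]" by (metis One_nat_def length_0_conv length_Suc_conv)
    then show False using xs assms(2) by auto
  qed
  have "\<forall>x\<in>set xs. x \<notin> X"
    using succ_set_R[of E "\<lambda>s. s \<notin> X" xs] xs(5) l2 by blast
  moreover have "successively E xs" using succ_mono[OF xs(5)] by blast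
  ultimately show ?thesis using that xs l2 by blast
qed

lemma ce1:
  assumes sg: "sgraph V E" and "i \<in> X" "E i p" "E i q" "p \<noteq> q" "conn E X p q"
  shows "\<exists>D. is_cycle V E D \<and> i \<in> set D \<and> p \<in> set D \<and> q \<in> set D \<and> set D \<inter> X \<subseteq> {i}"
proof -
  obtain xs where xs: "xs \<noteq> []" "hd xs = p" "last xs = q" "distinct xs" "2 \<le> length xs"
    "successively E xs" "set xs \<inter> X = {}"
    using conn_path[OF assms(6,5)] by blast
  have Ein: "\<And>x y. E x y \<Longrightarrow> x \<in> V \<and> y \<in> V" and Es: "\<And>x y. E x y \<Longrightarrow> E y x"
    using sg unfolding sgraph_def by auto
  have setV: "set xs \<subseteq> V"
  proof
    fix x assume "x \<in> set xs"
    then obtain k where k: "k < length xs" "x = xs ! k" by (metis in_set_conv_nth)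
    show "x \<in> V"
    proof (cases "Suc k < length xs")
      case True then show ?thesis using successively_nth[OF xs(6) True] Ein k by blast
    next
      case False
      then have "k = length xs - 1" using k by simp
      then have "x = q" using k xs(1,3) by (simp add: last_conv_nth)
      then show ?thesis using Ein assms(4) by blast
    qed
  qed
  have "is_cycle V E (i # xs)"
  proof (rule cycle_from_path)
    show "distinct (i # xs)" using xs(4,7) assms(2) by auto
    show "3 \<le> length (i # xs)" using xs(5) by simp
    show "set (i # xs) \<subseteq> V" using setV Ein assms(3) by auto
    show "successively E (i # xs)" using xs(1,2,6) assms(3) by (auto simp: successively_Cons)
    show "E (last (i # xs)) (hd (i # xs))" using xs(1,3) Es assms(4) by auto
  qed
  moreover have "p \<in> set xs" "q \<in> set xs" using xs(1,2,3) by auto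
  ultimately show ?thesis using xs(7) by (intro exI[of _ "i # xs"]) auto
qed



lemma succ_set_V:
  assumes sg: "sgraph V E" and "successively E xs" "2 \<le> length xs"
  shows "set xs \<subseteq> V"
proof -
  have "successively (\<lambda>s t. E s t \<and> s \<in> V \<and> t \<in> V) xs"
    by (rule succ_mono[OF assms(2)]) (use sg in \<open>auto simp: sgraph_def\<close>)
  then show ?thesis using succ_set_R[of E "\<lambda>s. s \<in> V" xs] assms(3) by blast
qed

lemma lpair:
  assumes sg: "sgraph V E" and "E y y'" "x \<noteq> y" "x \<noteq> y'"
    "conn E {x,y'} x' y" "conn E {x,y} x' y'"
  shows "\<exists>D. is_cycle V E D \<and> y \<in> set D \<and> y' \<in> set D \<and> x \<notin> set D"
proof -
  have Es: "\<And>a b. E a b \<Longrightarrow> E b a" and irr: "\<And>a. \<not> E a a"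
    using sg unfolding sgraph_def by auto
  have yy: "y \<noteq> y'" using irr assms(2) by auto
  define R where "R = (\<lambda>s t. (E s t \<and> \<not> {s,t} = {y,y'}) \<and> s \<noteq> x \<and> t \<noteq> x)"
  have Rs: "\<And>a b. R a b \<Longrightarrow> R b a" unfolding R_def using Es by (auto simp: insert_commute)
  have 1: "R\<^sup>*\<^sup>* x' y"
    using assms(5) unfolding conn_def
    by (rule rtranclp_mono[THEN predicate2D, rotated]) (auto simp: R_def doubleton_eq_iff)
  have 2: "R\<^sup>*\<^sup>* x' y'"
    using assms(6) unfolding conn_def
    by (rule rtranclp_mono[THEN predicate2D, rotated]) (auto simp: R_def doubleton_eq_iff)
  have rr: "R\<^sup>*\<^sup>* y y'" using rtranclp_sym[of R, OF Rs 1] 2 by (rule rtranclp_trans)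
  obtain xs where xs: "xs \<noteq> []" "hd xs = y" "last xs = y'" "distinct xs" "successively R xs"
    using path_exists[OF rr] by blast
  have l3: "3 \<le> length xs"
  proof (rule ccontr)
    assume "\<not> 3 \<le> length xs"
    moreover have "length xs \<noteq> 0" using xs(1) by simp
    ultimately consider "length xs = 1" | "length xs = 2" by arith
    then show False
    proof cases
      case 1
      then obtain a where "xs = [a]" by (metis One_nat_def length_0_conv length_Suc_conv)
      then show False using xs yy by auto
    next
      case 2
      then have "\<exists>a b. xs = [a, b]" by (auto simp: length_Suc_conv numeral_2_eq_2)
      then obtain a b where "xs = [a, b]" by blast
      then show False using xs by (auto simp: R_def)
    qed
  qed
  have h: "successively (\<lambda>s t. (\<lambda>s t. E s t \<and> \<not> {s,t} = {y,y'}) s t \<and> (\<lambda>s. s \<noteq> x) s \<and> (\<lambda>s. s \<noteq> x) t) xs"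
    using xs(5) unfolding R_def .
  have "\<forall>z\<in>set xs. (\<lambda>s. s \<noteq> x) z" by (rule succ_set_R[OF h]) (use l3 in linarith)
  then have nx: "\<forall>z\<in>set xs. z \<noteq> x" by simp
  have sE: "successively E xs" by (rule succ_mono[OF xs(5)]) (simp add: R_def)
  have "is_cycle V E xs"
  proof (rule cycle_from_path)
    show "set xs \<subseteq> V" using succ_set_V[OF sg sE] l3 by auto
    show "E (last xs) (hd xs)" using xs Es assms(2) by auto
  qed (use xs l3 sE in auto)
  moreover have "y \<in> set xs" "y' \<in> set xs" using xs(1,2,3) by auto
  ultimately show ?thesis using nx by blast
qed

lemma set_cyc_edges:
  assumes "xs \<noteq> []"
  shows "\<Union>(cyc_edges xs) = set xs"
proof
  show "\<Union>(cyc_edges xs) \<subseteq> set xs"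
    unfolding cyc_edges_def using assms by (auto simp: nth_mem)
  show "set xs \<subseteq> \<Union>(cyc_edges xs)"
  proof
    fix x assume "x \<in> set xs"
    then obtain k where "k < length xs" "x = xs ! k" by (metis in_set_conv_nth)
    then show "x \<in> \<Union>(cyc_edges xs)" unfolding cyc_edges_def by blast
  qed
qed

lemma cycle_rotate:
  assumes "is_cycle S E D"
  shows "is_cycle S E (rotate k D)"
  unfolding is_cycle_def
proof (intro conjI allI impI)
  have l: "3 \<le> length D" using assms unfolding is_cycle_def by auto
  fix i assume i: "i < length (rotate k D)"
  let ?n = "length D"
  have i': "i < ?n" using i by simp
  have a: "rotate k D ! i = D ! ((k + i) mod ?n)" using nth_rotate[OF i'] .
  have lt: "(i + 1) mod ?n < ?n" by (rule mod_less_divisor) (use l in linarith)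
  have b: "rotate k D ! ((i + 1) mod length (rotate k D)) = D ! ((k + (i + 1) mod ?n) mod ?n)"
    using nth_rotate[OF lt, of k] by simp
  have c: "(k + (i + 1) mod ?n) mod ?n = ((k + i) mod ?n + 1) mod ?n"
    by (metis add.assoc mod_add_left_eq mod_add_right_eq)
  have jl: "(k + i) mod ?n < ?n" by (rule mod_less_divisor) (use l in linarith)
  have ce: "\<forall>j<?n. E (D ! j) (D ! ((j + 1) mod ?n))" using assms unfolding is_cycle_def by blast
  have "E (D ! ((k + i) mod ?n)) (D ! (((k + i) mod ?n + 1) mod ?n))"
    using ce jl by blast
  then show "E (rotate k D ! i) (rotate k D ! ((i + 1) mod length (rotate k D)))"
    using a b c by simp
qed (use assms in \<open>auto simp: is_cycle_def\<close>)



lemma colorM: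
  assumes sg: "sgraph V E" and vV: "v \<notin> V" and NV: "N \<subseteq> V" and IN: "I \<subseteq> N"
    and ind: "independent I E"
    and hc: "\<forall>D. is_cycle V E D \<longrightarrow> set D \<inter> I \<noteq> {}"
    and sep: "\<forall>p\<in>N-I. \<forall>q\<in>N-I. p \<noteq> q \<longrightarrow> \<not> conn E I p q"
  shows "near_bipartite_coloring (insert v V) (add_vertex E v N) I (insert v V - I)
         \<and> I \<subseteq> {u. add_vertex E v N v u}"
proof -
  let ?E = "add_vertex E v N"
  let ?S = "insert v V - I"
  have Ein: "\<And>x y. E x y \<Longrightarrow> x \<in> V \<and> y \<in> V" using sg unfolding sgraph_def by auto
  have E1: "\<And>x y. x \<noteq> v \<Longrightarrow> y \<noteq> v \<Longrightarrow> ?E x y \<longleftrightarrow> E x y"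
    unfolding add_vertex_def by auto
  have E2: "\<And>y. ?E v y \<longleftrightarrow> y \<in> N" "\<And>y. ?E y v \<longleftrightarrow> y \<in> N"
    unfolding add_vertex_def using Ein vV by auto
  have sub: "I \<subseteq> {u. ?E v u}" using IN E2 by auto
  have indep: "independent I ?E"
    using ind IN NV vV unfolding independent_def add_vertex_def by blast
  have forest: "induced_forest ?S ?E"
    unfolding induced_forest_def
  proof
    assume "\<exists>D. is_cycle ?S ?E D"
    then obtain D where D: "is_cycle ?S ?E D" by blast
    have Dl: "3 \<le> length D" "distinct D" "set D \<subseteq> ?S"
      and De: "\<And>i. i < length D \<Longrightarrow> ?E (D ! i) (D ! ((i + 1) mod length D))"
      using D unfolding is_cycle_def by auto
    show False
    proof (cases "v \<in> set D")
      case False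
      have "is_cycle V E D"
        unfolding is_cycle_def
      proof (intro conjI allI impI)
        fix i assume i: "i < length D"
        have lt: "(i + 1) mod length D < length D" by (rule mod_less_divisor) (use Dl(1) in linarith)
        have "D ! i \<noteq> v" "D ! ((i + 1) mod length D) \<noteq> v"
          using False nth_mem[OF i] nth_mem[OF lt] by auto
        then show "E (D ! i) (D ! ((i + 1) mod length D))" using De[OF i] E1 by simp
      qed (use Dl False in auto)
      then have "set D \<inter> I \<noteq> {}" using hc by blast
      then show False using Dl(3) by auto
    next
      case True
      then obtain k where k: "k < length D" "D ! k = v" by (metis in_set_conv_nth)
      let ?n = "length D"
      define D' where "D' = rotate k D"
      have D': "is_cycle ?S ?E D'" unfolding D'_def by (rule cycle_rotate[OF D])
      have D'l: "length D' = ?n" "distinct D'" "set D' \<subseteq> ?S"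
        and D'e: "\<And>i. i < ?n \<Longrightarrow> ?E (D' ! i) (D' ! ((i + 1) mod ?n))"
        using D' unfolding is_cycle_def D'_def by auto
      have l0: "0 < length D" using Dl(1) by linarith
      have Dne: "D \<noteq> []" "D' \<noteq> []" using l0 unfolding D'_def by auto
      have d0: "D' ! 0 = v" unfolding D'_def using nth_rotate[OF l0, of k] k by simp
      have neq: "\<And>j. 0 < j \<Longrightarrow> j < ?n \<Longrightarrow> D' ! j \<noteq> v"
      proof -
        fix j assume "0 < j" "j < ?n"
        then have "D' ! j \<noteq> D' ! 0" using D'l(1,2) Dl(1) nth_eq_iff_index_eq[of D' j 0] Dne by auto
        then show "D' ! j \<noteq> v" using d0 by simp
      qed
      have inS: "\<And>j. j < ?n \<Longrightarrow> D' ! j \<notin> I"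
        using D'l by (metis DiffD2 nth_mem subsetD)
      let ?p = "D' ! 1" and ?q = "D' ! (?n - 1)"
      have "?E v ?p" using D'e[of 0] d0 Dl(1) Dne by simp
      then have pN: "?p \<in> N" using E2 by simp
      have e0: "?n - 1 + 1 = ?n" using Dl(1) by linarith
      have e1: "?n - 1 < ?n" "(?n - 1 + 1) mod ?n = 0" using Dl(1) by (linarith, simp only: e0 mod_self)
      have "?E ?q (D' ! 0)" using D'e[OF e1(1)] unfolding e1(2) .
      then have qN: "?q \<in> N" using E2 d0 by simp
      have pq: "?p \<noteq> ?q" using D'l(1,2) Dl(1) nth_eq_iff_index_eq[of D' 1 "?n - 1"] Dne by auto
      have walk: "\<And>j. 1 \<le> j \<Longrightarrow> j < ?n \<Longrightarrow> conn E I ?p (D' ! j)"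
      proof -
        fix j assume "1 \<le> j" "j < ?n"
        then show "conn E I ?p (D' ! j)"
        proof (induction j rule: dec_induct)
          case base then show ?case unfolding conn_def by simp
        next
          case (step m)
          have "?E (D' ! m) (D' ! ((m + 1) mod ?n))" using D'e[of m] step by simp
          moreover have "(m + 1) mod ?n = Suc m" using step by simp
          ultimately have "?E (D' ! m) (D' ! Suc m)" by simp
          then have "E (D' ! m) (D' ! Suc m)" using E1 neq step by simp
          moreover have "D' ! m \<notin> I" "D' ! Suc m \<notin> I" using inS step by auto
          ultimately show ?case using step unfolding conn_def
            by (simp add: rtranclp.rtrancl_into_rtrancl)
        qed
      qed
      have "conn E I ?p ?q" by (rule walk) (use Dl(1) in linarith)+
      moreover have "?p \<notin> I" "?q \<notin> I" by (rule inS, use Dl(1) in linarith)+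
      ultimately show False using sep pN qN pq by blast
    qed
  qed
  show ?thesis
    unfolding near_bipartite_coloring_def using sub indep forest IN NV by auto
qed



definition good :: "'a set \<Rightarrow> ('a \<Rightarrow> 'a \<Rightarrow> bool) \<Rightarrow> 'a set \<Rightarrow> 'a set \<Rightarrow> 'a set \<Rightarrow> bool" where
  "good V E K N I \<longleftrightarrow> I \<subseteq> N \<and> independent I E \<and> (K \<noteq> {} \<longrightarrow> I \<inter> K \<noteq> {})
     \<and> (\<forall>p\<in>N-I. \<forall>q\<in>N-I. p \<noteq> q \<longrightarrow> \<not> conn E I p q)"

locale setting =
  fixes V :: "'a set" and E :: "'a \<Rightarrow> 'a \<Rightarrow> bool" and K :: "'a set" and N :: "'a set"
  assumes sg: "sgraph V E" and NV: "N \<subseteq> V" and cN: "card N \<le> 4"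
    and HK: "\<forall>D. is_cycle V E D \<longrightarrow> set D = K"
    and HK2: "K \<noteq> {} \<longrightarrow> N \<inter> K \<noteq> {} \<and> 4 \<le> card K \<and> finite K"
begin

lemma Es: "E x y \<Longrightarrow> E y x" using sg unfolding sgraph_def by auto
lemma irr: "\<not> E x x" using sg unfolding sgraph_def by auto
lemma Ein: "E x y \<Longrightarrow> x \<in> V \<and> y \<in> V" using sg unfolding sgraph_def by auto
lemma finN: "finite N" using sg NV unfolding sgraph_def by (auto intro: finite_subset)

lemma tri: assumes "E a b" "E b c" "E a c" shows False
proof -
  have d: "a \<noteq> b" "b \<noteq> c" "a \<noteq> c" using assms irr by auto
  have "is_cycle V E [a,b,c]"
    by (rule cycle_from_path) (use assms d Ein Es in auto)
  then have "K = {a,b,c}" using HK by auto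
  then have "card K = 3" "K \<noteq> {}" using d by auto
  then show False using HK2 by auto
qed

lemma ce1K:
  assumes "i \<in> X" "E i p" "E i q" "p \<noteq> q" "conn E X p q"
  shows "K \<noteq> {} \<and> i \<in> K \<and> p \<in> K \<and> q \<in> K \<and> (\<forall>x\<in>X. x \<noteq> i \<longrightarrow> x \<notin> K)"
  using ce1[OF sg assms] HK by fastforce

lemma lpairK:
  assumes "E y y'" "x \<noteq> y" "x \<noteq> y'" "conn E {x,y'} x' y" "conn E {x,y} x' y'"
  shows "K \<noteq> {} \<and> y \<in> K \<and> y' \<in> K \<and> x \<notin> K"
  using lpair[OF sg assms] HK by fastforce

lemma csym: "conn E X p q \<Longrightarrow> conn E X q p"
  using conn_sym[of E X p q] Es by blast

lemma cand:
  assumes "N = {x,x',y,y'}" "distinct [x,x',y,y']" "\<not> E x y"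
    "K \<noteq> {} \<longrightarrow> x \<in> K \<or> y \<in> K" "\<not> conn E {x,y} x' y'"
  shows "good V E K N {x,y}"
  unfolding good_def
proof (intro conjI)
  show "independent {x, y} E" unfolding independent_def using assms(3) irr Es by blast
  show "\<forall>p\<in>N - {x, y}. \<forall>q\<in>N - {x, y}. p \<noteq> q \<longrightarrow> \<not> conn E {x, y} p q"
    using assms(1,2,5) csym by auto
qed (use assms in auto)

lemma star:
  assumes "z \<in> N" "\<forall>x\<in>N. \<forall>y\<in>N. E x y \<longrightarrow> x = z \<or> y = z"
  shows "\<exists>I. good V E K N I"
proof (cases "K = {} \<or> (N - {z}) \<inter> K \<noteq> {}")
  case True
  have "good V E K N (N - {z})"
    unfolding good_def independent_def using True assms by auto
  then show ?thesis by blast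
next
  case False
  then have K: "K \<noteq> {}" "(N - {z}) \<inter> K = {}" by auto
  then have zK: "z \<in> K" using HK2 by auto
  let ?I = "insert z {x\<in>N. x \<noteq> z \<and> \<not> E z x}"
  have "good V E K N ?I"
    unfolding good_def
  proof (intro conjI)
    show "independent ?I E" unfolding independent_def using assms irr Es by blast
    show "\<forall>p\<in>N - ?I. \<forall>q\<in>N - ?I. p \<noteq> q \<longrightarrow> \<not> conn E ?I p q"
    proof (intro ballI impI)
      fix p q assume p: "p \<in> N - ?I" and q: "q \<in> N - ?I" and pq: "p \<noteq> q"
      show "\<not> conn E ?I p q"
      proof
        assume c: "conn E ?I p q"
        have "E z p" "E z q" using p q by auto
        then have "p \<in> K" using ce1K[OF _ _ _ pq c] by blast
        then show False using K p by auto
      qed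
    qed
  qed (use assms zK in auto)
  then show ?thesis by blast
qed


lemma matching:
  assumes N: "N = {a,b,c,d}" and dist: "distinct [a,b,c,d]" and ab: "E a b" and cd: "E c d"
  shows "\<exists>I. good V E K N I"
proof (rule ccontr)
  assume ng: "\<not> (\<exists>I. good V E K N I)"
  have NE: "K \<noteq> {} \<longrightarrow> a \<in> K \<or> b \<in> K \<or> c \<in> K \<or> d \<in> K" using HK2 N by auto
  have f1: "E a c \<or> (K \<noteq> {} \<and> a \<notin> K \<and> c \<notin> K) \<or> conn E {a,c} b d"
    using cand[of a b c d] N dist ng by (metis insert_commute)
  have f2: "E a d \<or> (K \<noteq> {} \<and> a \<notin> K \<and> d \<notin> K) \<or> conn E {a,d} b c"
    using cand[of a b d c] N dist ng by (auto simp: insert_commute)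
  have f3: "E b c \<or> (K \<noteq> {} \<and> b \<notin> K \<and> c \<notin> K) \<or> conn E {b,c} a d"
    using cand[of b a c d] N dist ng by (auto simp: insert_commute)
  have f4: "E b d \<or> (K \<noteq> {} \<and> b \<notin> K \<and> d \<notin> K) \<or> conn E {b,d} a c"
    using cand[of b a d c] N dist ng by (auto simp: insert_commute)
  have ba: "E b a" and dc: "E d c" using ab cd Es by auto
  have l1: "conn E {a,c} b d \<Longrightarrow> conn E {a,d} b c \<Longrightarrow> K \<noteq> {} \<and> c \<in> K \<and> d \<in> K \<and> a \<notin> K"
    using lpairK[of c d a b] cd dist by auto
  have l2: "conn E {b,c} a d \<Longrightarrow> conn E {b,d} a c \<Longrightarrow> K \<noteq> {} \<and> c \<in> K \<and> d \<in> K \<and> b \<notin> K"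
    using lpairK[of c d b a] cd dist by auto
  have l3: "conn E {a,c} b d \<Longrightarrow> conn E {b,c} a d \<Longrightarrow> K \<noteq> {} \<and> a \<in> K \<and> b \<in> K \<and> c \<notin> K"
    using lpairK[of a b c d] ab dist csym by (auto simp: insert_commute)
  have l4: "conn E {a,d} b c \<Longrightarrow> conn E {b,d} a c \<Longrightarrow> K \<noteq> {} \<and> a \<in> K \<and> b \<in> K \<and> d \<notin> K"
    using lpairK[of a b d c] ab dist csym by (auto simp: insert_commute)
  have c1: "conn E {a,c} b d \<Longrightarrow> E a d \<Longrightarrow> K \<noteq> {} \<and> a \<in> K \<and> b \<in> K \<and> d \<in> K \<and> c \<notin> K"
    using ce1K[of a "{a,c}" b d] ab dist by auto
  have c2: "conn E {a,c} b d \<Longrightarrow> E c b \<Longrightarrow> K \<noteq> {} \<and> c \<in> K \<and> b \<in> K \<and> d \<in> K \<and> a \<notin> K"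
    using ce1K[of c "{a,c}" b d] cd dist by auto
  have c3: "conn E {a,d} b c \<Longrightarrow> E a c \<Longrightarrow> K \<noteq> {} \<and> a \<in> K \<and> b \<in> K \<and> c \<in> K \<and> d \<notin> K"
    using ce1K[of a "{a,d}" b c] ab dist by auto
  have c4: "conn E {a,d} b c \<Longrightarrow> E d b \<Longrightarrow> K \<noteq> {} \<and> d \<in> K \<and> b \<in> K \<and> c \<in> K \<and> a \<notin> K"
    using ce1K[of d "{a,d}" b c] dc dist by auto
  have c5: "conn E {b,c} a d \<Longrightarrow> E b d \<Longrightarrow> K \<noteq> {} \<and> b \<in> K \<and> a \<in> K \<and> d \<in> K \<and> c \<notin> K"
    using ce1K[of b "{b,c}" a d] ba dist by auto
  have c6: "conn E {b,c} a d \<Longrightarrow> E c a \<Longrightarrow> K \<noteq> {} \<and> c \<in> K \<and> a \<in> K \<and> d \<in> K \<and> b \<notin> K"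
    using ce1K[of c "{b,c}" a d] cd dist by auto
  have c7: "conn E {b,d} a c \<Longrightarrow> E b c \<Longrightarrow> K \<noteq> {} \<and> b \<in> K \<and> a \<in> K \<and> c \<in> K \<and> d \<notin> K"
    using ce1K[of b "{b,d}" a c] ba dist by auto
  have c8: "conn E {b,d} a c \<Longrightarrow> E d a \<Longrightarrow> K \<noteq> {} \<and> d \<in> K \<and> a \<in> K \<and> c \<in> K \<and> b \<notin> K"
    using ce1K[of d "{b,d}" a c] dc dist by auto
  have t1: "\<not> (E a c \<and> E a d)" using tri[of a c d] cd by blast
  have t2: "\<not> (E b c \<and> E b d)" using tri[of b c d] cd by blast
  have t3: "\<not> (E a c \<and> E b c)" using tri[of a b c] ab Es by blast
  have t4: "\<not> (E a d \<and> E b d)" using tri[of a b d] ab Es by blast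
  have q1: "E a c \<Longrightarrow> E b d \<Longrightarrow> K \<noteq> {} \<and> a \<in> K \<and> b \<in> K \<and> c \<in> K \<and> d \<in> K"
  proof -
    assume h: "E a c" "E b d"
    have "is_cycle V E [a,b,d,c]"
      by (rule cycle_from_path) (use h ab cd dist Ein Es in auto)
    then show ?thesis using HK by auto
  qed
  have q2: "E a d \<Longrightarrow> E b c \<Longrightarrow> K \<noteq> {} \<and> a \<in> K \<and> b \<in> K \<and> c \<in> K \<and> d \<in> K"
  proof -
    assume h: "E a d" "E b c"
    have "is_cycle V E [a,b,c,d]"
      by (rule cycle_from_path) (use h ab cd dist Ein Es in auto)
    then show ?thesis using HK by auto
  qed
  have sy: "E c a = E a c" "E d b = E b d" "E c b = E b c" "E d a = E a d" using Es by blast+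
  show False
    using NE f1 f2 f3 f4 l1 l2 l3 l4 c1 c2 c3 c4 c5 c6 c7 c8 t1 t2 t3 t4 q1 q2
    unfolding sy by blast
qed


end


context setting begin
lemma four:
  assumes "{a,b,c,d} \<subseteq> N" "distinct [a,b,c,d]"
  shows "N = {a,b,c,d}"
proof -
  have "card {a,b,c,d} = 4" using assms(2) by auto
  then show ?thesis using card_subset_eq[OF finN assms(1)] cN card_mono[OF finN assms(1)] by auto
qed

lemma five:
  assumes "{a,b,c,d,e} \<subseteq> N" "distinct [a,b,c,d,e]"
  shows False
proof -
  have "card {a,b,c,d,e} = 5" using assms(2) by auto
  then show ?thesis using cN card_mono[OF finN assms(1)] by auto
qed

lemma nonstar:
  assumes "N \<noteq> {}" "\<not> (\<exists>z\<in>N. \<forall>x\<in>N. \<forall>y\<in>N. E x y \<longrightarrow> x = z \<or> y = z)"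
  shows "\<exists>a b c d. N = {a,b,c,d} \<and> distinct [a,b,c,d] \<and> E a b \<and> E c d"
proof -
  have ns: "\<And>z. z \<in> N \<Longrightarrow> \<exists>x\<in>N. \<exists>y\<in>N. E x y \<and> x \<noteq> z \<and> y \<noteq> z" using assms(2) by blast
  obtain z0 where "z0 \<in> N" using assms(1) by blast
  then obtain a b where ab: "a \<in> N" "b \<in> N" "E a b" using ns by blast
  then have "a \<noteq> b" using irr by auto
  obtain x y where xy: "x \<in> N" "y \<in> N" "E x y" "x \<noteq> a" "y \<noteq> a" using ns[OF ab(1)] by blast
  have "x \<noteq> y" using irr xy by auto
  show ?thesis
  proof (cases "x \<noteq> b \<and> y \<noteq> b")
    case True
    have d: "distinct [a,b,x,y]" using True xy \<open>a \<noteq> b\<close> \<open>x \<noteq> y\<close> by auto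
    have "N = {a,b,x,y}" by (rule four) (use ab xy d in simp_all)
    then show ?thesis using d ab xy by blast
  next
    case False
    then obtain w where w: "w \<in> N" "w \<noteq> a" "w \<noteq> b" "E b w"
      using xy Es \<open>x \<noteq> y\<close> by metis
    obtain s t where st: "s \<in> N" "t \<in> N" "E s t" "s \<noteq> b" "t \<noteq> b" using ns[OF ab(2)] by blast
    have "\<not> (s \<in> {a,w} \<and> t \<in> {a,w})"
    proof
      assume "s \<in> {a,w} \<and> t \<in> {a,w}"
      then have "E a w" using st irr Es by auto
      then show False using tri[of a b w] ab w by blast
    qed
    then obtain s' t' where st': "s' \<in> N" "t' \<in> N" "E s' t'" "s' \<noteq> b" "t' \<notin> {a,b,w}"
      using st Es by blast
    have "s' \<noteq> t'" using irr st' by auto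
    consider "s' = a" | "s' = w" | "s' \<notin> {a,b,w}" using st' by blast
    then show ?thesis
    proof cases
      case 1
      have d: "distinct [b,w,a,t']" using st' w ab 1 \<open>a \<noteq> b\<close> by auto
      have "N = {b,w,a,t'}" by (rule four) (use st' w ab d in simp_all)
      then show ?thesis using d st' w 1 by blast
    next
      case 2
      have d: "distinct [a,b,w,t']" using st' w ab 2 \<open>a \<noteq> b\<close> by auto
      have "N = {a,b,w,t'}" by (rule four) (use st' w ab d in simp_all)
      then show ?thesis using d st' w ab 2 by blast
    next
      case 3
      have d: "distinct [a,b,w,s',t']" using 3 st' w ab \<open>a \<noteq> b\<close> \<open>s' \<noteq> t'\<close> by auto
      have False using five[of a b w s' t'] st' w ab d by simp
      then show ?thesis ..
    qed
  qed
qed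

lemma core: "\<exists>I. good V E K N I"
proof (cases "N = {}")
  case True
  then have "K = {}" using HK2 by auto
  then have "good V E K N {}" unfolding good_def independent_def using True by auto
  then show ?thesis by blast
next
  case False
  show ?thesis
  proof (cases "\<exists>z\<in>N. \<forall>x\<in>N. \<forall>y\<in>N. E x y \<longrightarrow> x = z \<or> y = z")
    case True
    then show ?thesis using star by blast
  next
    case ns: False
    then show ?thesis using nonstar[OF False ns] matching by blast
  qed
qed

end



theorem lemma4p36:
  fixes V :: "'a set" and E :: "'a \<Rightarrow> 'a \<Rightarrow> bool" and v :: 'a and N :: "'a set"
  assumes "sgraph V E"
    and "is_tree V E \<or>
         (connected_graph V E \<and>
          (\<exists>C. is_cycle V E C \<and> length C \<noteq> 3
               \<and> (\<forall>C'. is_cycle V E C' \<longrightarrow> cyc_edges C' = cyc_edges C)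
               \<and> N \<inter> set C \<noteq> {}))"
    and "v \<notin> V"
    and "N \<subseteq> V"
    and "card N \<le> 4"
  shows "\<exists>I F. near_bipartite_coloring (insert v V) (add_vertex E v N) I F
               \<and> I \<subseteq> {u. add_vertex E v N v u}"
proof -
  obtain K where HK: "\<forall>D. is_cycle V E D \<longrightarrow> set D = K"
    and HK2: "K \<noteq> {} \<longrightarrow> N \<inter> K \<noteq> {} \<and> 4 \<le> card K \<and> finite K"
  proof (cases "is_tree V E")
    case True
    then have "\<forall>D. is_cycle V E D \<longrightarrow> set D = {}"
      unfolding is_tree_def induced_forest_def by blast
    then show ?thesis using that by blast
  next
    case False
    then obtain C where C: "is_cycle V E C" "length C \<noteq> 3"
      "\<forall>C'. is_cycle V E C' \<longrightarrow> cyc_edges C' = cyc_edges C" "N \<inter> set C \<noteq> {}"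
      using assms(2) by blast
    have h1: "\<forall>D. is_cycle V E D \<longrightarrow> set D = set C"
    proof (intro allI impI)
      fix D assume D: "is_cycle V E D"
      have "D \<noteq> []" "C \<noteq> []" using D C(1) unfolding is_cycle_def by auto
      then show "set D = set C" using set_cyc_edges C(3) D by metis
    qed
    have "card (set C) = length C" "3 \<le> length C"
      using C(1) distinct_card unfolding is_cycle_def by auto
    then have "4 \<le> card (set C)" using C(2) by auto
    then show ?thesis using that[OF h1] C(4) by blast
  qed
  interpret setting V E K N
    by unfold_locales (use assms HK HK2 in auto)
  obtain I where I: "good V E K N I" using core by blast
  have hc: "\<forall>D. is_cycle V E D \<longrightarrow> set D \<inter> I \<noteq> {}"
  proof (intro allI impI)
    fix D assume D: "is_cycle V E D"
    then have "set D = K" "D \<noteq> []" using HK unfolding is_cycle_def by auto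
    then show "set D \<inter> I \<noteq> {}" using I unfolding good_def by auto
  qed
  have "near_bipartite_coloring (insert v V) (add_vertex E v N) I (insert v V - I)
         \<and> I \<subseteq> {u. add_vertex E v N v u}"
    by (rule colorM[OF assms(1,3,4)]) (use I hc in \<open>auto simp: good_def\<close>)
  then show ?thesis by blast
qed


end
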